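(* Consider the coupled SIS epidemic and evolutionary behavioral dynamics $$\dot y = \big[(1-y)(z_S+\alpha(1-z_S))(\beta_u z_I+\beta_p(1-z_I))-\gamma\big]y,$$ $$\dot z_S = z_S(1-z_S)\big[c_P - L(1-\alpha)(\beta_u z_I+\beta_p(1-z_I))\,y\big],$$ $$\dot z_I = z_I(1-z_I)(c_{\mathtt{IP}}-c_{\mathtt{IU}}),$$ on $[0,1]^3$. Define $$y^*_u := 1-\frac{\gamma}{\beta_p},\quad y^*_{\mathrm{int}} := \frac{c_P}{L(1-\alpha)\beta_p},\quad y^*_p := 1-\frac{\gamma}{\alpha\beta_p},\quad z^*_{S,\mathrm{int}} := \frac{1}{1-\alpha}\left[\frac{\gamma}{\beta_p(1-y^*_{\mathrm{int}})}-\alpha\right],$$ and the candidate equilibria (with $z_I=0$) $\mathbf{E0}=(0,0,0)$, $\mathbf{E1}=(0,1,0)$, $\mathbf{E2}=(y^*_u,1,0)$, $\mathbf{E3}=(y^*_{\mathrm{int}},z^*_{S,\mathrm{int}},0)$, $\mathbf{E4}=(y^*_p,0,0)$. Then: (1) $\mathbf{E0}$ is an equilibrium for all parameter values and is unstable; (2) $\mathbf{E1}$ is an equilibrium for all parameter values; it is stable if $\beta_p<\gamma$ and unstable if $\beta_p>\gamma$; (3) $\mathbf{E2}$ is an equilibrium in $[0,1]^3$ (with $y>0$) only when $\beta_p>\gamma$; it is stable when $y^*_u<y^*_{\mathrm{int}}$ and unstable when $y^*_u>y^*_{\mathrm{int}}$; (4) $\mathbf{E3}$ is an equilibrium with $y^*_{\mathrm{int}}\in(0,1)$,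 $z^*_{S,\mathrm{int}}\in(0,1)$ only when $y^*_p<y^*_{\mathrm{int}}<y^*_u$, and then it is stable; (5) $\mathbf{E4}$ is an equilibrium with $y^*_p\in(0,1)$ only when $\gamma<\alpha\beta_p$; it is stable when $y^*_p>y^*_{\mathrm{int}}$ and unstable when $y^*_p<y^*_{\mathrm{int}}$.
   Context: Parameters: $\alpha\in(0,1)$, $\beta_u>\beta_p>0$, $\gamma>0$, $c_P>0$, $L>0$, $c_{\mathtt{IU}}>c_{\mathtt{IP}}\ge 0$. Here $y$ is the infected fraction, $z_S$ the unprotected fraction among susceptibles, $z_I$ the unprotected fraction among infected. "Stable" means locally exponentially stable (all eigenvalues of the Jacobian of the vector field at the equilibrium have negative real part); "unstable" means the Jacobian has an eigenvalue with positive real part. *)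

theory Defs
  imports "HOL-Analysis.Analysis"
begin

text \<open>Points of R^3 are of type real^3; coordinate 1 = y, 2 = z_S, 3 = z_I.\<close>

definition vec3 :: "real \<Rightarrow> real \<Rightarrow> real \<Rightarrow> real^3" where
  "vec3 a b c = (\<chi> i. if i = 1 then a else if i = 2 then b else c)"

definition sis_field ::
  "real \<Rightarrow> real \<Rightarrow> real \<Rightarrow> real \<Rightarrow> real \<Rightarrow> real \<Rightarrow> real \<Rightarrow> real \<Rightarrow> real^3 \<Rightarrow> real^3" where
  "sis_field \<alpha> \<beta>u \<beta>p \<gamma> cP L cIU cIP x =
     (let y = x $ 1; zS = x $ 2; zI = x $ 3;
          \<beta> = \<beta>u * zI + \<beta>p * (1 - zI) in
      vec3 (((1 - y) * (zS + \<alpha> * (1 - zS)) * \<beta> - \<gamma>) * y)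
           (zS * (1 - zS) * (cP - L * (1 - \<alpha>) * \<beta> * y))
           (zI * (1 - zI) * (cIP - cIU)))"

definition equilibrium :: "(real^3 \<Rightarrow> real^3) \<Rightarrow> real^3 \<Rightarrow> bool" where
  "equilibrium f p \<longleftrightarrow> f p = 0"

definition cpx_eigenvalue :: "real^'n^'n \<Rightarrow> complex \<Rightarrow> bool" where
  "cpx_eigenvalue A \<mu> \<longleftrightarrow>
     det ((\<chi> i j. (if i = j then \<mu> else 0) - complex_of_real (A $ i $ j)) :: complex^'n^'n) = 0"

definition lin_stable :: "(real^3 \<Rightarrow> real^3) \<Rightarrow> real^3 \<Rightarrow> bool" where
  "lin_stable f p \<longleftrightarrow> (\<forall>\<mu>. cpx_eigenvalue (jacobian f (at p)) \<mu> \<longrightarrow> Re \<mu> < 0)"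

definition lin_unstable :: "(real^3 \<Rightarrow> real^3) \<Rightarrow> real^3 \<Rightarrow> bool" where
  "lin_unstable f p \<longleftrightarrow> (\<exists>\<mu>. cpx_eigenvalue (jacobian f (at p)) \<mu> \<and> Re \<mu> > 0)"

end

theory Submission
  imports Defs
begin

lemma vec3_nth[simp]: "vec3 a b c $ 1 = a" "vec3 a b c $ 2 = b" "vec3 a b c $ 3 = c"
  by (simp_all add: vec3_def)

lemma vec3_alt: "vec3 a b c = a *\<^sub>R axis 1 1 + b *\<^sub>R axis 2 1 + c *\<^sub>R axis 3 1"
  by (simp add: vec_eq_iff forall_3 axis_def)

lemma has_derivative_vec3:
  assumes "(f1 has_derivative f1') F" "(f2 has_derivative f2') F" "(f3 has_derivative f3') F"
  shows "((\<lambda>x. vec3 (f1 x) (f2 x) (f3 x)) has_derivative (\<lambda>h. vec3 (f1' h) (f2' h) (f3' h))) F"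
  unfolding vec3_alt
  by (intro has_derivative_add has_derivative_scaleR_left assms)

lemma nth_deriv: "((\<lambda>x::real^3. x $ i) has_derivative (\<lambda>h. h $ i)) F"
  by (rule bounded_linear_imp_has_derivative) (rule bounded_linear_vec_nth)

definition DF where
 "DF \<alpha> \<beta>u \<beta>p \<gamma> cP L cIU cIP (x::real^3) (h::real^3) =
   (let y = x $ 1; zS = x $ 2; zI = x $ 3;
          \<beta> = \<beta>u * zI + \<beta>p * (1 - zI); sg = zS + \<alpha> * (1 - zS) in
   vec3 (((1-y)* sg *\<beta> - \<gamma> - sg *\<beta>*y) * h$1 + (1-y)*(1-\<alpha>)*\<beta>*y * h$2 + (1-y)* sg *(\<beta>u-\<beta>p)*y * h$3)
        (- zS*(1-zS)*L*(1-\<alpha>)*\<beta> * h$1 + (1-2*zS)*(cP - L*(1-\<alpha>)*\<beta>*y) * h$2 - zS*(1-zS)*L*(1-\<alpha>)*(\<beta>u-\<beta>p)*y * h$3)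
        ((1-2*zI)*(cIP-cIU) * h$3))"

lemma sis_deriv: "(sis_field \<alpha> \<beta>u \<beta>p \<gamma> cP L cIU cIP has_derivative DF \<alpha> \<beta>u \<beta>p \<gamma> cP L cIU cIP x) (at x)"
  unfolding sis_field_def DF_def Let_def
  apply (rule has_derivative_vec3)
  apply (auto intro!: derivative_eq_intros nth_deriv simp: algebra_simps)
  done


lemma jac: "jacobian (sis_field \<alpha> \<beta>u \<beta>p \<gamma> cP L cIU cIP) (at x) = matrix (DF \<alpha> \<beta>u \<beta>p \<gamma> cP L cIU cIP x)"
  by (simp add: jacobian_def frechet_derivative_at[OF sis_deriv, symmetric])


lemma jac_entries:
  fixes \<alpha> \<beta>u \<beta>p \<gamma> cP L cIU cIP y z :: real
  defines "J \<equiv> jacobian (sis_field \<alpha> \<beta>u \<beta>p \<gamma> cP L cIU cIP) (at (vec3 y z 0))"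
  shows "J$1$1 = (1-y)*(z + \<alpha> * (1 - z))*\<beta>p - \<gamma> - (z + \<alpha> * (1 - z))*\<beta>p*y"
    "J$1$2 = (1-y)*(1-\<alpha>)*\<beta>p*y" "J$1$3 = (1-y)*(z + \<alpha> * (1 - z))*(\<beta>u-\<beta>p)*y"
    "J$2$1 = - z*(1-z)*L*(1-\<alpha>)*\<beta>p" "J$2$2 = (1-2*z)*(cP - L*(1-\<alpha>)*\<beta>p*y)"
    "J$2$3 = - z*(1-z)*L*(1-\<alpha>)*(\<beta>u-\<beta>p)*y"
    "J$3$1 = 0" "J$3$2 = 0" "J$3$3 = cIP - cIU"
  unfolding J_def jac by (simp_all add: matrix_def DF_def Let_def axis_def)

lemma eig:
  fixes \<alpha> \<beta>u \<beta>p \<gamma> cP L cIU cIP y z :: real and \<mu> :: complex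
  shows "cpx_eigenvalue (jacobian (sis_field \<alpha> \<beta>u \<beta>p \<gamma> cP L cIU cIP) (at (vec3 y z 0))) \<mu> \<longleftrightarrow>
    (\<mu> - of_real (cIP - cIU)) * ((\<mu> - of_real ((1-y)*(z + \<alpha> * (1 - z))*\<beta>p - \<gamma> - (z + \<alpha> * (1 - z))*\<beta>p*y)) * (\<mu> - of_real ((1-2*z)*(cP - L*(1-\<alpha>)*\<beta>p*y)))
        - of_real ((1-y)*(1-\<alpha>)*\<beta>p*y) * of_real (- z*(1-z)*L*(1-\<alpha>)*\<beta>p)) = 0"
  unfolding cpx_eigenvalue_def det_3
  apply (simp only: vec_lambda_beta jac_entries)
  apply (simp add: algebra_simps)
  done


lemma quad_re:
  fixes \<mu> :: complex and p q :: real
  assumes "p > 0" "q > 0" "\<mu>*\<mu> + of_real p * \<mu> + of_real q = 0"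
  shows "Re \<mu> < 0"
proof -
  obtain x w where mu: "\<mu> = Complex x w" by (cases \<mu>)
  from assms(3) have r: "x*x - w*w + p*x + q = 0" and i: "2*x*w + p*w = 0"
    unfolding mu complex_eq_iff by (simp_all add: algebra_simps)
  show ?thesis
  proof (cases "w = 0")
    case True
    with r have "x*x + p*x + q = 0" by simp
    then show ?thesis using assms(1,2) unfolding mu
      by (smt (verit) mult_nonneg_nonneg complex.sel(1))
  next
    case False
    with i have "2*x + p = 0"
      by (metis distrib_right mult_eq_0_iff)
    then show ?thesis using assms(1) unfolding mu by simp
  qed
qed

lemma stable_crit:
  fixes \<mu> :: complex and a b c d e :: real
  assumes "d < 0" "a + e < 0" "a*e - b*c > 0"
    "(\<mu> - of_real d) * ((\<mu> - of_real a)*(\<mu> - of_real e) - of_real b * of_real c) = 0"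
  shows "Re \<mu> < 0"
proof -
  from assms(4) consider "\<mu> = of_real d" | "(\<mu> - of_real a)*(\<mu> - of_real e) - of_real b * of_real c = 0"
    by auto
  then show ?thesis
  proof cases
    case 1 then show ?thesis using assms(1) by simp
  next
    case 2
    then have "\<mu>*\<mu> + of_real (-(a+e)) * \<mu> + of_real (a*e - b*c) = 0"
      by (simp add: algebra_simps)
    then show ?thesis using quad_re[of "-(a+e)" "a*e-b*c" \<mu>] assms(2,3) by simp
  qed
qed


lemma stable_at:
  fixes \<alpha> \<beta>u \<beta>p \<gamma> cP L cIU cIP y z A B C E :: real
  assumes "cIP < cIU" "A + E < 0" "A*E - B*C > 0"
    "A = (1-y)*(z + \<alpha> * (1 - z))*\<beta>p - \<gamma> - (z + \<alpha> * (1 - z))*\<beta>p*y"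
    "B = (1-y)*(1-\<alpha>)*\<beta>p*y" "C = - z*(1-z)*L*(1-\<alpha>)*\<beta>p"
    "E = (1-2*z)*(cP - L*(1-\<alpha>)*\<beta>p*y)"
  shows "lin_stable (sis_field \<alpha> \<beta>u \<beta>p \<gamma> cP L cIU cIP) (vec3 y z 0)"
  unfolding lin_stable_def eig
proof (intro allI impI)
  fix \<mu> :: complex
  assume "(\<mu> - of_real (cIP - cIU)) * ((\<mu> - of_real ((1-y)*(z + \<alpha> * (1 - z))*\<beta>p - \<gamma> - (z + \<alpha> * (1 - z))*\<beta>p*y)) * (\<mu> - of_real ((1-2*z)*(cP - L*(1-\<alpha>)*\<beta>p*y)))
        - of_real ((1-y)*(1-\<alpha>)*\<beta>p*y) * of_real (- z*(1-z)*L*(1-\<alpha>)*\<beta>p)) = 0"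
  then have "(\<mu> - of_real (cIP - cIU)) * ((\<mu> - of_real A)*(\<mu> - of_real E) - of_real B * of_real C) = 0"
    using assms(4-7) by simp
  then show "Re \<mu> < 0" using stable_crit[of "cIP - cIU" A E B C \<mu>] assms(1-3) by simp
qed

lemma unstable_at:
  fixes \<alpha> \<beta>u \<beta>p \<gamma> cP L cIU cIP y z A B C E :: real
  assumes "B*C = 0" "A > 0 \<or> E > 0"
    "A = (1-y)*(z + \<alpha> * (1 - z))*\<beta>p - \<gamma> - (z + \<alpha> * (1 - z))*\<beta>p*y"
    "B = (1-y)*(1-\<alpha>)*\<beta>p*y" "C = - z*(1-z)*L*(1-\<alpha>)*\<beta>p"
    "E = (1-2*z)*(cP - L*(1-\<alpha>)*\<beta>p*y)"
  shows "lin_unstable (sis_field \<alpha> \<beta>u \<beta>p \<gamma> cP L cIU cIP) (vec3 y z 0)"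
  unfolding lin_unstable_def eig
proof -
  have bc: "(of_real B :: complex) * of_real C = 0" using assms(1)
    by (metis of_real_0 of_real_mult)
  from assms(2) obtain r where r: "r > 0" "r = A \<or> r = E" by blast
  have "(of_real r - of_real (cIP - cIU)) * ((of_real r - of_real A)*(of_real r - of_real E) - of_real B * of_real C) = (0::complex)"
    using r(2) bc by auto
  then show "\<exists>\<mu>. (\<mu> - of_real (cIP - cIU)) * ((\<mu> - of_real ((1-y)*(z + \<alpha> * (1 - z))*\<beta>p - \<gamma> - (z + \<alpha> * (1 - z))*\<beta>p*y)) * (\<mu> - of_real ((1-2*z)*(cP - L*(1-\<alpha>)*\<beta>p*y)))
        - of_real ((1-y)*(1-\<alpha>)*\<beta>p*y) * of_real (- z*(1-z)*L*(1-\<alpha>)*\<beta>p)) = 0 \<and> 0 < Re \<mu>"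
    using r(1) assms(3-6) by (intro exI[of _ "of_real r"]) simp
qed


theorem proposition1:
  fixes \<alpha> \<beta>u \<beta>p \<gamma> cP L cIU cIP :: real
  assumes "0 < \<alpha>" "\<alpha> < 1" "0 < \<beta>p" "\<beta>p < \<beta>u" "0 < \<gamma>" "0 < cP" "0 < L"
    and "0 \<le> cIP" "cIP < cIU"
  defines "F \<equiv> sis_field \<alpha> \<beta>u \<beta>p \<gamma> cP L cIU cIP"
    and "yu \<equiv> 1 - \<gamma> / \<beta>p"
    and "yint \<equiv> cP / (L * (1 - \<alpha>) * \<beta>p)"
    and "yp \<equiv> 1 - \<gamma> / (\<alpha> * \<beta>p)"
    and "zSint \<equiv> (1 / (1 - \<alpha>)) * (\<gamma> / (\<beta>p * (1 - cP / (L * (1 - \<alpha>) * \<beta>p))) - \<alpha>)"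
  shows
    \<comment> \<open>(1) E0\<close>
    "(equilibrium F (vec3 0 0 0) \<and> lin_unstable F (vec3 0 0 0))
     \<comment> \<open>(2) E1\<close>
     \<and> (equilibrium F (vec3 0 1 0)
        \<and> (\<beta>p < \<gamma> \<longrightarrow> lin_stable F (vec3 0 1 0))
        \<and> (\<beta>p > \<gamma> \<longrightarrow> lin_unstable F (vec3 0 1 0)))
     \<comment> \<open>(3) E2\<close>
     \<and> (equilibrium F (vec3 yu 1 0)
        \<and> ((0 < yu \<and> yu \<le> 1) \<longleftrightarrow> \<beta>p > \<gamma>)
        \<and> (\<beta>p > \<gamma> \<and> yu < yint \<longrightarrow> lin_stable F (vec3 yu 1 0))
        \<and> (\<beta>p > \<gamma> \<and> yu > yint \<longrightarrow> lin_unstable F (vec3 yu 1 0)))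
     \<comment> \<open>(4) E3\<close>
     \<and> (((0 < yint \<and> yint < 1 \<and> 0 < zSint \<and> zSint < 1) \<longleftrightarrow> (yp < yint \<and> yint < yu))
        \<and> (yp < yint \<and> yint < yu \<longrightarrow>
             equilibrium F (vec3 yint zSint 0) \<and> lin_stable F (vec3 yint zSint 0)))
     \<comment> \<open>(5) E4\<close>
     \<and> (equilibrium F (vec3 yp 0 0)
        \<and> ((0 < yp \<and> yp < 1) \<longleftrightarrow> \<gamma> < \<alpha> * \<beta>p)
        \<and> (yp > yint \<longrightarrow> lin_stable F (vec3 yp 0 0))
        \<and> (yp < yint \<longrightarrow> lin_unstable F (vec3 yp 0 0)))"
  proof -
  have bp: "\<beta>p > 0" and al: "1 - \<alpha> > 0" using assms by auto
  have eqF: "equilibrium F (vec3 a b c) \<longleftrightarrow> F (vec3 a b c) = 0" for a b c unfolding equilibrium_def ..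
  have Fv: "F (vec3 y z 0) = vec3 (((1 - y) * (z + \<alpha> * (1 - z)) * \<beta>p - \<gamma>) * y)
           (z * (1 - z) * (cP - L * (1 - \<alpha>) * \<beta>p * y)) 0" for y z
    unfolding F_def sis_field_def Let_def by simp
  have zero: "vec3 a b c = 0 \<longleftrightarrow> a = 0 \<and> b = 0 \<and> c = 0" for a b c
    by (simp add: vec_eq_iff forall_3)
  have yint_pos: "yint > 0" unfolding yint_def using assms by simp
  have yint_eq: "L * (1 - \<alpha>) * \<beta>p * yint = cP" unfolding yint_def using assms by simp
  have yu_eq: "(1 - yu) * \<beta>p = \<gamma>" unfolding yu_def using assms by (simp add: field_simps)
  have yp_eq: "(1 - yp) * (\<alpha> * \<beta>p) = \<gamma>" unfolding yp_def using assms by (simp add: field_simps)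
  have zS_eq: "zSint = (1 / (1 - \<alpha>)) * (\<gamma> / (\<beta>p * (1 - yint)) - \<alpha>)"
    unfolding zSint_def yint_def ..
  have P1: "equilibrium F (vec3 0 0 0) \<and> lin_unstable F (vec3 0 0 0)"
    unfolding F_def
    by (auto simp: eqF[unfolded F_def] Fv[unfolded F_def] zero intro!: unstable_at[OF _ _ refl refl refl refl] assms)
  have P2: "equilibrium F (vec3 0 1 0)
        \<and> (\<beta>p < \<gamma> \<longrightarrow> lin_stable F (vec3 0 1 0))
        \<and> (\<beta>p > \<gamma> \<longrightarrow> lin_unstable F (vec3 0 1 0))"
    unfolding F_def
    using assms(6)
    by (auto simp: eqF[unfolded F_def] Fv[unfolded F_def] zero
        intro!: unstable_at[OF _ _ refl refl refl refl] stable_at[OF _ _ _ refl refl refl refl] assms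
        mult_neg_pos)
  have P3: "equilibrium F (vec3 yu 1 0)
        \<and> ((0 < yu \<and> yu \<le> 1) \<longleftrightarrow> \<beta>p > \<gamma>)
        \<and> (\<beta>p > \<gamma> \<and> yu < yint \<longrightarrow> lin_stable F (vec3 yu 1 0))
        \<and> (\<beta>p > \<gamma> \<and> yu > yint \<longrightarrow> lin_unstable F (vec3 yu 1 0))"
  proof (intro conjI impI)
    show "equilibrium F (vec3 yu 1 0)" using yu_eq by (simp add: eqF Fv zero)
    show "(0 < yu \<and> yu \<le> 1) \<longleftrightarrow> \<beta>p > \<gamma>" unfolding yu_def using assms
      by (simp add: field_simps)
  next
    assume h: "\<beta>p > \<gamma> \<and> yu < yint"
    have yu0: "yu > 0" unfolding yu_def using h assms by (simp add: field_simps)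
    have "L * (1 - \<alpha>) * \<beta>p * yu < L * (1 - \<alpha>) * \<beta>p * yint"
      using h assms by (intro mult_strict_left_mono) auto
    then have E: "(1 - 2*1) * (cP - L * (1 - \<alpha>) * \<beta>p * yu) < 0" using yint_eq by simp
    have A: "(1 - yu) * (1 + \<alpha> * (1 - 1)) * \<beta>p - \<gamma> - (1 + \<alpha> * (1 - 1)) * \<beta>p * yu < 0"
      using yu_eq yu0 bp by simp
    show "lin_stable F (vec3 yu 1 0)" unfolding F_def
      apply (rule stable_at[OF _ _ _ refl refl refl refl])
      using assms(9) A E apply simp_all
      using A E mult_neg_neg by fastforce
  next
    assume h: "\<beta>p > \<gamma> \<and> yu > yint"
    have "L * (1 - \<alpha>) * \<beta>p * yu > L * (1 - \<alpha>) * \<beta>p * yint"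
      using h assms by (intro mult_strict_left_mono) auto
    then show "lin_unstable F (vec3 yu 1 0)" unfolding F_def
      using yint_eq by (intro unstable_at[OF _ _ refl refl refl refl]) (auto simp: algebra_simps)
  qed
  have P5: "equilibrium F (vec3 yp 0 0)
        \<and> ((0 < yp \<and> yp < 1) \<longleftrightarrow> \<gamma> < \<alpha> * \<beta>p)
        \<and> (yp > yint \<longrightarrow> lin_stable F (vec3 yp 0 0))
        \<and> (yp < yint \<longrightarrow> lin_unstable F (vec3 yp 0 0))"
  proof (intro conjI impI)
    show "equilibrium F (vec3 yp 0 0)" using yp_eq by (simp add: eqF Fv zero algebra_simps)
    show "(0 < yp \<and> yp < 1) \<longleftrightarrow> \<gamma> < \<alpha> * \<beta>p" unfolding yp_def using assms
      by (simp add: field_simps)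
  next
    assume h: "yp > yint"
    have yp0: "yp > 0" using h yint_pos by simp
    have "L * (1 - \<alpha>) * \<beta>p * yp > L * (1 - \<alpha>) * \<beta>p * yint"
      using h assms by (intro mult_strict_left_mono) auto
    then have E: "(1 - 2*0) * (cP - L * (1 - \<alpha>) * \<beta>p * yp) < 0" using yint_eq by simp
    have A: "(1 - yp) * (0 + \<alpha> * (1 - 0)) * \<beta>p - \<gamma> - (0 + \<alpha> * (1 - 0)) * \<beta>p * yp < 0"
    proof -
      have "(1 - yp) * (0 + \<alpha> * (1 - 0)) * \<beta>p - \<gamma> - (0 + \<alpha> * (1 - 0)) * \<beta>p * yp = - (\<alpha>*\<beta>p*yp)"
        using yp_eq by (simp add: algebra_simps)
      moreover have "\<alpha>*\<beta>p*yp > 0" using yp0 bp assms(1) by simp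
      ultimately show ?thesis by linarith
    qed
    show "lin_stable F (vec3 yp 0 0)" unfolding F_def
      apply (rule stable_at[OF _ _ _ refl refl refl refl])
      using assms(9) A E apply simp_all
      using A E mult_neg_neg by fastforce
  next
    assume h: "yp < yint"
    have "L * (1 - \<alpha>) * \<beta>p * yp < L * (1 - \<alpha>) * \<beta>p * yint"
      using h assms by (intro mult_strict_left_mono) auto
    then show "lin_unstable F (vec3 yp 0 0)" unfolding F_def
      using yint_eq by (intro unstable_at[OF _ _ refl refl refl refl]) (auto simp: algebra_simps)
  qed
  have P4: "((0 < yint \<and> yint < 1 \<and> 0 < zSint \<and> zSint < 1) \<longleftrightarrow> (yp < yint \<and> yint < yu))
        \<and> (yp < yint \<and> yint < yu \<longrightarrow>
             equilibrium F (vec3 yint zSint 0) \<and> lin_stable F (vec3 yint zSint 0))"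
  proof -
    have yu1: "yu < 1" unfolding yu_def using assms(3,5) by simp
    have key: "(0 < zSint \<longleftrightarrow> yp < yint) \<and> (zSint < 1 \<longleftrightarrow> yint < yu)" if w: "yint < 1"
    proof -
      have w0: "1 - yint > 0" using w by simp
      define q where "q = \<gamma> / (\<beta>p * (1 - yint))"
      have zq: "zSint = (q - \<alpha>) / (1 - \<alpha>)" unfolding zS_eq q_def by simp
      have z1: "0 < zSint \<longleftrightarrow> \<alpha> < q" unfolding zq using al by (simp add: field_simps)
      have z2: "zSint < 1 \<longleftrightarrow> q < 1" unfolding zq using al by (simp add: field_simps)
      have q1: "\<alpha> < q \<longleftrightarrow> yp < yint" unfolding q_def yp_def using w0 bp assms(1)
        by (simp add: field_simps)
      have q2: "q < 1 \<longleftrightarrow> yint < yu" unfolding q_def yu_def using w0 bp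
        by (simp add: field_simps)
      show ?thesis using z1 z2 q1 q2 by blast
    qed
    have iff: "(0 < yint \<and> yint < 1 \<and> 0 < zSint \<and> zSint < 1) \<longleftrightarrow> (yp < yint \<and> yint < yu)"
    proof
      assume "0 < yint \<and> yint < 1 \<and> 0 < zSint \<and> zSint < 1"
      then show "yp < yint \<and> yint < yu" using key by blast
    next
      assume h: "yp < yint \<and> yint < yu"
      then have "yint < 1" using yu1 by simp
      then show "0 < yint \<and> yint < 1 \<and> 0 < zSint \<and> zSint < 1" using key h yint_pos by blast
    qed
    have E3: "equilibrium F (vec3 yint zSint 0) \<and> lin_stable F (vec3 yint zSint 0)"
      if h: "yp < yint \<and> yint < yu"
    proof -
      have w: "yint < 1" using h yu1 by simp
      have zr: "0 < zSint" "zSint < 1" using key[OF w] h by auto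
      have w0: "1 - yint > 0" using w by simp
      define sg where "sg = zSint + \<alpha> * (1 - zSint)"
      have "(1 - \<alpha>) * zSint = \<gamma> / (\<beta>p * (1 - yint)) - \<alpha>" unfolding zS_eq using al by simp
      then have sg_eq: "sg = \<gamma> / (\<beta>p * (1 - yint))" unfolding sg_def
        by (simp add: algebra_simps)
      have sg0: "sg > 0" unfolding sg_eq using w0 bp assms(5) by simp
      have f1: "(1 - yint) * sg * \<beta>p = \<gamma>" unfolding sg_eq using w0 bp by (simp add: field_simps)
      have eq: "equilibrium F (vec3 yint zSint 0)"
        using f1 yint_eq by (simp add: eqF Fv zero sg_def)
      have A: "(1 - yint) * sg * \<beta>p - \<gamma> - sg * \<beta>p * yint < 0"
        using f1 sg0 bp yint_pos by simp
      have E: "(1 - 2 * zSint) * (cP - L * (1 - \<alpha>) * \<beta>p * yint) = 0" using yint_eq by simp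
      have B: "(1 - yint) * (1 - \<alpha>) * \<beta>p * yint > 0" using w0 al bp yint_pos by simp
      have C: "- zSint * (1 - zSint) * L * (1 - \<alpha>) * \<beta>p < 0" using zr al bp assms(7) by simp
      have BC: "(1 - yint) * (1 - \<alpha>) * \<beta>p * yint * (- zSint * (1 - zSint) * L * (1 - \<alpha>) * \<beta>p) < 0"
        using B C mult_pos_neg by blast
      have st: "lin_stable F (vec3 yint zSint 0)" unfolding F_def
        apply (rule stable_at[OF _ _ _ refl refl refl refl])
        apply (rule assms(9))
        using A BC unfolding sg_def E by simp_all
      show ?thesis using eq st by blast
    qed
    show ?thesis using iff E3 by blast
  qed
  show ?thesis using P1 P2 P3 P4 P5 by blast
qed

end
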